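(* Let $k$ be a positive integer, let $d\ge0$ and let $p\in\mathbb{C}[x_1,x_2]$ be homogeneous of degree $d$. Let $0\le i_1,\dots,i_k,j_1,\dots,j_k\le d$ be integers with $\sum_\ell i_\ell=\sum_\ell j_\ell$. Then, in $\mathbb{C}[x_1,x_2,y_1,y_2]$, $$\Delta^{j_1}(p)\cdots\Delta^{j_k}(p)\in\Big\langle\,\Delta^{i_1}(p)\cdots\Delta^{i_k}(p),\ B^{k-1}\cdot(x_1y_2-x_2y_1)\,\Big\rangle,$$ where $B=\{p,\Delta(p),\dots,\Delta^{d}(p),\,x_1y_2-x_2y_1\}$, $B^{k-1}\cdot(x_1y_2-x_2y_1)$ denotes the set of all products of $k-1$ elements of $B$ multiplied by $x_1y_2-x_2y_1$, and $\langle\cdot\rangle$ denotes the generated ideal.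
   Context: $\Delta$ is the polarization operator $\Delta=y_1\,\partial_{x_1}+y_2\,\partial_{x_2}$ acting on $\mathbb{C}[x_1,x_2,y_1,y_2]$, and $\Delta^i$ its $i$-th iterate. *)

theory Defs
  imports Complex_Main "HOL-Library.Poly_Mapping"
begin

text \<open>We use the variables
x1 = 0, x2 = 1, y1 = 2, y2 = 3, so C[x1,x2,y1,y2] is the subring of
polynomials involving only the variables 0..3.\<close>

type_synonym mpoly = "(nat \<Rightarrow>\<^sub>0 nat) \<Rightarrow>\<^sub>0 complex"

definition Var :: "nat \<Rightarrow> mpoly" where
  "Var i = Poly_Mapping.single (Poly_Mapping.single i 1) 1"

definition pdiff :: "nat \<Rightarrow> mpoly \<Rightarrow> mpoly" where
  "pdiff i p = (\<Sum>(m::nat \<Rightarrow>\<^sub>0 nat)\<in>Poly_Mapping.keys p.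
      Poly_Mapping.single (m - Poly_Mapping.single i 1)
        (of_nat (Poly_Mapping.lookup m i) * Poly_Mapping.lookup p m))"

definition Delta :: "mpoly \<Rightarrow> mpoly" where
  "Delta p = Var 2 * pdiff 0 p + Var 3 * pdiff 1 p"

definition homog_xy :: "nat \<Rightarrow> mpoly \<Rightarrow> bool" where
  "homog_xy d p \<longleftrightarrow> (\<forall>m\<in>Poly_Mapping.keys p. Poly_Mapping.keys m \<subseteq> {0, 1} \<and> (\<Sum>v\<in>Poly_Mapping.keys m. Poly_Mapping.lookup m v) = d)"

definition ideal_gen :: "'a::comm_ring_1 set \<Rightarrow> 'a set" where
  "ideal_gen S = {x. \<exists>F c. finite F \<and> F \<subseteq> S \<and> x = (\<Sum>s\<in>F. c s * s)}"

definition wdet :: mpoly where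
  "wdet = Var 0 * Var 3 - Var 1 * Var 2"

definition Bset :: "nat \<Rightarrow> mpoly \<Rightarrow> mpoly set" where
  "Bset d p = {(Delta ^^ i) p | i. i \<le> d} \<union> {wdet}"

definition Bpow_w :: "nat \<Rightarrow> nat \<Rightarrow> mpoly \<Rightarrow> mpoly set" where
  "Bpow_w k d p = {prod_list bs * wdet | bs. length bs = k - 1 \<and> set bs \<subseteq> Bset d p}"

end

theory Submission
  imports Defs
begin


abbreviation e :: "nat \<Rightarrow> (nat \<Rightarrow>\<^sub>0 nat)" where "e i \<equiv> Poly_Mapping.single i 1"

lemma lookup_pmdiff: "Poly_Mapping.lookup (m - n) k = Poly_Mapping.lookup m k - Poly_Mapping.lookup n k"
  for m n :: "nat \<Rightarrow>\<^sub>0 nat"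
  by (simp add: minus_poly_mapping.rep_eq)

lemma sub_e_eq: "Poly_Mapping.lookup m i \<ge> 1 \<Longrightarrow> (m - e i = n) \<longleftrightarrow> (m = n + e i)"
  by (auto simp: poly_mapping_eq_iff fun_eq_iff lookup_pmdiff lookup_add lookup_single when_def)

lemma lookup_pdiff: "Poly_Mapping.lookup (pdiff i p) n = of_nat (Poly_Mapping.lookup n i + 1) * Poly_Mapping.lookup p (n + e i)"
proof -
  have "Poly_Mapping.lookup (pdiff i p) n =
     (\<Sum>m\<in>Poly_Mapping.keys p. if m = n + e i then of_nat (Poly_Mapping.lookup m i) * Poly_Mapping.lookup p m else 0)"
    unfolding pdiff_def lookup_sum
  proof (rule sum.cong[OF refl])
    fix m assume "m \<in> Poly_Mapping.keys p"
    show "Poly_Mapping.lookup (Poly_Mapping.single (m - e i) (of_nat (Poly_Mapping.lookup m i) * Poly_Mapping.lookup p m)) n =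
         (if m = n + e i then of_nat (Poly_Mapping.lookup m i) * Poly_Mapping.lookup p m else 0)"
    proof (cases "Poly_Mapping.lookup m i \<ge> 1")
      case True
      then show ?thesis using sub_e_eq[OF True, of n] by (auto simp add: lookup_single when_def)
    next
      case False
      then have "m \<noteq> n + e i" by (auto simp: lookup_add)
      with False show ?thesis by (simp add: lookup_single when_def)
    qed
  qed
  also have "\<dots> = (if n + e i \<in> Poly_Mapping.keys p then of_nat (Poly_Mapping.lookup (n + e i) i) * Poly_Mapping.lookup p (n + e i) else 0)"
    by (simp add: sum.delta')
  also have "\<dots> = of_nat (Poly_Mapping.lookup n i + 1) * Poly_Mapping.lookup p (n + e i)"
    by (auto simp: lookup_add in_keys_iff)
  finally show ?thesis .
qed

lemma pdiff_add: "pdiff i (f + g) = pdiff i f + pdiff i g"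
  by (rule poly_mapping_eqI) (simp add: lookup_pdiff lookup_add algebra_simps)
lemma pdiff_diff: "pdiff i (f - g) = pdiff i f - pdiff i g"
  by (rule poly_mapping_eqI) (simp add: lookup_pdiff lookup_minus algebra_simps)
lemma pdiff_zero: "pdiff i 0 = 0"
  by (rule poly_mapping_eqI) (simp add: lookup_pdiff)
lemma pdiff_sum: "pdiff i (sum f S) = (\<Sum>s\<in>S. pdiff i (f s))"
  by (rule poly_mapping_eqI) (simp add: lookup_pdiff lookup_sum sum_distrib_left)
lemma pdiff_comm: "pdiff i (pdiff j f) = pdiff j (pdiff i f)"
  by (rule poly_mapping_eqI) (auto simp: lookup_pdiff lookup_add lookup_single when_def algebra_simps)

lemma pdiff_single: "pdiff i (Poly_Mapping.single m c) = Poly_Mapping.single (m - e i) (of_nat (Poly_Mapping.lookup m i) * c)"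
  by (simp add: pdiff_def)

lemma poly_expand: "f = (\<Sum>m\<in>Poly_Mapping.keys f. Poly_Mapping.single m (Poly_Mapping.lookup f m))"
  by (rule poly_mapping_eqI) (simp add: lookup_sum lookup_single when_def sum.delta' in_keys_iff)

lemma shift_eq: "Poly_Mapping.lookup m i = 0 \<or> m - e i + n = m + n - e i"
  by (auto simp: poly_mapping_eq_iff fun_eq_iff lookup_pmdiff lookup_add lookup_single when_def)

lemma pdiff_mono_mult: "pdiff i (Poly_Mapping.single m a * Poly_Mapping.single n b) =
   pdiff i (Poly_Mapping.single m a) * Poly_Mapping.single n b + Poly_Mapping.single m a * pdiff i (Poly_Mapping.single n b)"
proof -
  have 1: "Poly_Mapping.single (m - e i + n) (of_nat (Poly_Mapping.lookup m i) * a * b)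
      = Poly_Mapping.single (m + n - e i) (of_nat (Poly_Mapping.lookup m i) * a * b)"
    using shift_eq[of m i n] by auto
  have 2: "Poly_Mapping.single (m + (n - e i)) (a * (of_nat (Poly_Mapping.lookup n i) * b))
      = Poly_Mapping.single (m + n - e i) (of_nat (Poly_Mapping.lookup n i) * a * b)"
  proof (cases "Poly_Mapping.lookup n i = 0")
    case True then show ?thesis by simp
  next
    case False
    then have h: "m + (n - e i) = m + n - e i" using shift_eq[of n i m] by (auto simp: add.commute)
    have c: "a * (of_nat (Poly_Mapping.lookup n i) * b) = of_nat (Poly_Mapping.lookup n i) * a * b" by (simp add: mult_ac)
    show ?thesis by (simp only: h c)
  qed
  have "pdiff i (Poly_Mapping.single m a * Poly_Mapping.single n b) =
     Poly_Mapping.single (m + n - e i) (of_nat (Poly_Mapping.lookup m i) * a * b) + Poly_Mapping.single (m + n - e i) (of_nat (Poly_Mapping.lookup n i) * a * b)"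
    by (simp add: mult_single pdiff_single lookup_add algebra_simps flip: single_add)
  also have "\<dots> = pdiff i (Poly_Mapping.single m a) * Poly_Mapping.single n b + Poly_Mapping.single m a * pdiff i (Poly_Mapping.single n b)"
    unfolding pdiff_single mult_single 1 2 by (simp add: mult.assoc)
  finally show ?thesis .
qed

lemma pdiff_mult: "pdiff i (f * g) = pdiff i f * g + f * pdiff i g"
proof -
  let ?F = "\<lambda>m. Poly_Mapping.single m (Poly_Mapping.lookup f m)"
  let ?G = "\<lambda>m. Poly_Mapping.single m (Poly_Mapping.lookup g m)"
  have "f * g = (\<Sum>m\<in>Poly_Mapping.keys f. \<Sum>n\<in>Poly_Mapping.keys g. ?F m * ?G n)"
    by (subst poly_expand[of f], subst poly_expand[of g]) (simp add: sum_distrib_left sum_distrib_right, rule sum.swap)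
  then have "pdiff i (f * g) = (\<Sum>m\<in>Poly_Mapping.keys f. \<Sum>n\<in>Poly_Mapping.keys g. pdiff i (?F m) * ?G n + ?F m * pdiff i (?G n))"
    by (simp add: pdiff_sum pdiff_mono_mult)
  also have "\<dots> = pdiff i f * g + f * pdiff i g"
  proof -
    define F where "F = (\<Sum>m\<in>Poly_Mapping.keys f. ?F m)"
    define G where "G = (\<Sum>m\<in>Poly_Mapping.keys g. ?G m)"
    have hf: "f = F" unfolding F_def by (rule poly_expand)
    have hg: "g = G" unfolding G_def by (rule poly_expand)
    have "pdiff i f * g + f * pdiff i g = pdiff i F * G + F * pdiff i G" by (simp add: hf hg)
    also have "\<dots> = (\<Sum>m\<in>Poly_Mapping.keys f. \<Sum>n\<in>Poly_Mapping.keys g. pdiff i (?F m) * ?G n + ?F m * pdiff i (?G n))"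
      unfolding F_def G_def by (simp only: pdiff_sum sum_product sum.distrib)
    finally show ?thesis by simp
  qed
  finally show ?thesis .
qed

abbreviation K :: "complex \<Rightarrow> mpoly" where "K c \<equiv> Poly_Mapping.single 0 c"

lemma pdiff_Var: "pdiff i (Var j) = (if i = j then 1 else 0)"
  by (auto simp: Var_def pdiff_single lookup_single when_def)

lemma pdiff_K: "pdiff i (K c) = 0"
  by (simp add: pdiff_single)

lemma K_mult: "K a * K b = K (a * b)" by (simp add: mult_single)
lemma K_add: "K a + K b = K (a + b)" by (simp add: single_add)
lemma K_diff: "K a - K b = K (a - b)" by (simp add: single_diff)
lemma K_one: "K 1 = 1" by simp

lemma Delta_add: "Delta (f + g) = Delta f + Delta g"
  by (simp add: Delta_def pdiff_add algebra_simps)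
lemma Delta_diff: "Delta (f - g) = Delta f - Delta g"
  by (simp add: Delta_def pdiff_diff algebra_simps)
lemma Delta_mult: "Delta (f * g) = Delta f * g + f * Delta g"
  by (simp add: Delta_def pdiff_mult algebra_simps)
lemma Delta_K: "Delta (K c) = 0"
  by (simp add: Delta_def pdiff_K)
lemma Delta_Kmult: "Delta (K c * f) = K c * Delta f"
  by (simp add: Delta_mult Delta_K)
lemma Delta_wdet: "Delta wdet = 0"
  by (simp add: Delta_def wdet_def pdiff_diff pdiff_mult pdiff_Var algebra_simps)

definition Eu :: "mpoly \<Rightarrow> mpoly" where
  "Eu f = Var 0 * pdiff 0 f + Var 1 * pdiff 1 f"

lemma pdiff_Delta0: "pdiff 0 (Delta F) = Delta (pdiff 0 F)"
  by (simp add: Delta_def pdiff_add pdiff_mult pdiff_Var pdiff_comm[of "Suc 0" 0])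
lemma pdiff_Delta1: "pdiff 1 (Delta F) = Delta (pdiff 1 F)"
  by (simp add: Delta_def pdiff_add pdiff_mult pdiff_Var pdiff_comm[of "Suc 0" 0])

lemma Eu_pdiff0: "Eu (pdiff 0 F) = pdiff 0 (Eu F) - pdiff 0 F"
  by (simp add: Eu_def pdiff_add pdiff_mult pdiff_Var pdiff_comm[of "Suc 0" 0])
lemma Eu_pdiff1: "Eu (pdiff 1 F) = pdiff 1 (Eu F) - pdiff 1 F"
  by (simp add: Eu_def pdiff_add pdiff_mult pdiff_Var pdiff_comm[of "Suc 0" 0])

lemma Eu_Delta: "Eu (Delta F) = Delta (Eu F) - Delta F"
  by (simp add: Eu_def Delta_def pdiff_add pdiff_mult pdiff_Var pdiff_comm[of "Suc 0" 0] algebra_simps)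

lemma add_sub_e: "Poly_Mapping.lookup m i \<ge> 1 \<Longrightarrow> e i + (m - e i) = m"
  by (auto simp: poly_mapping_eq_iff fun_eq_iff lookup_pmdiff lookup_add lookup_single when_def)

lemma Var_mult_single: "Var i * Poly_Mapping.single (m - e i) (of_nat (Poly_Mapping.lookup m i) * c)
   = Poly_Mapping.single m (of_nat (Poly_Mapping.lookup m i) * c)"
proof (cases "Poly_Mapping.lookup m i \<ge> 1")
  case True then show ?thesis using add_sub_e[OF True] by (simp add: Var_def mult_single)
next
  case False then have "Poly_Mapping.lookup m i = 0" by simp
  then show ?thesis by simp
qed

lemma Eu_single: "Eu (Poly_Mapping.single m c) = Poly_Mapping.single m (of_nat (Poly_Mapping.lookup m 0 + Poly_Mapping.lookup m 1) * c)"
  unfolding Eu_def pdiff_single Var_mult_single by (simp add: algebra_simps flip: single_add)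

lemma of_nat_mult_single: "of_nat n * Poly_Mapping.single m c = Poly_Mapping.single m (of_nat n * c)"
  by (metis single_of_nat mult_single add_0)

lemma Eu_sum: "Eu (sum f S) = (\<Sum>s\<in>S. Eu (f s))"
  by (simp add: Eu_def pdiff_sum sum_distrib_left sum.distrib)

lemma Eu_homog:
  assumes "homog_xy d p"
  shows "Eu p = K (of_nat d) * p"
proof -
  have deg: "Poly_Mapping.lookup m 0 + Poly_Mapping.lookup m 1 = d" if "m \<in> Poly_Mapping.keys p" for m
  proof -
    from assms that have k: "Poly_Mapping.keys m \<subseteq> {0,1}" and s: "(\<Sum>v\<in>Poly_Mapping.keys m. Poly_Mapping.lookup m v) = d"
      unfolding homog_xy_def by auto
    have "(\<Sum>v\<in>Poly_Mapping.keys m. Poly_Mapping.lookup m v) = (\<Sum>v\<in>{0,1}. Poly_Mapping.lookup m v)"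
      by (rule sum.mono_neutral_left) (use k in \<open>auto simp: in_keys_iff\<close>)
    with s show ?thesis by simp
  qed
  have "Eu p = (\<Sum>m\<in>Poly_Mapping.keys p. Eu (Poly_Mapping.single m (Poly_Mapping.lookup p m)))"
    by (subst poly_expand, rule Eu_sum)
  also have "\<dots> = (\<Sum>m\<in>Poly_Mapping.keys p. K (of_nat d) * Poly_Mapping.single m (Poly_Mapping.lookup p m))"
  proof (rule sum.cong[OF refl])
    fix m assume "m \<in> Poly_Mapping.keys p"
    then have "of_nat (Poly_Mapping.lookup m 0 + Poly_Mapping.lookup m 1) = (of_nat d :: complex)" using deg by simp
    then show "Eu (Poly_Mapping.single m (Poly_Mapping.lookup p m)) = K (of_nat d) * Poly_Mapping.single m (Poly_Mapping.lookup p m)"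
      by (simp only: Eu_single single_of_nat of_nat_mult_single)
  qed
  also have "\<dots> = K (of_nat d) * p"
    by (subst (2) poly_expand) (simp add: sum_distrib_left)
  finally show ?thesis .
qed

lemma Eu_Delta_pow:
  assumes "homog_xy d p"
  shows "Eu ((Delta ^^ a) p) = K (of_nat d - of_nat a) * (Delta ^^ a) p"
proof (induction a)
  case 0 then show ?case using Eu_homog[OF assms] by simp
next
  case (Suc a)
  have "Eu ((Delta ^^ Suc a) p) = Delta (Eu ((Delta ^^ a) p)) - (Delta ^^ Suc a) p"
    by (simp add: Eu_Delta)
  also have "\<dots> = K (of_nat d - of_nat a) * (Delta ^^ Suc a) p - K 1 * (Delta ^^ Suc a) p"
    by (simp add: Suc Delta_Kmult)
  also have "\<dots> = K (of_nat d - of_nat (Suc a)) * (Delta ^^ Suc a) p"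
    by (simp only: left_diff_distrib[symmetric] K_diff) (simp add: algebra_simps)
  finally show ?case .
qed

definition Jac :: "mpoly \<Rightarrow> mpoly \<Rightarrow> mpoly" where
  "Jac F G = pdiff 0 F * pdiff 1 G - pdiff 1 F * pdiff 0 G"

lemma wJ: "Eu F * Delta G - Delta F * Eu G = wdet * Jac F G"
  by (simp add: Eu_def Delta_def wdet_def Jac_def algebra_simps)

lemma Var_mult_expand: "Var i * f = (\<Sum>m\<in>Poly_Mapping.keys f. Poly_Mapping.single (e i + m) (Poly_Mapping.lookup f m))"
  by (subst poly_expand[of f]) (simp add: sum_distrib_left Var_def mult_single)

lemma lookup_Var_mult_shift: "Poly_Mapping.lookup (Var i * f) (e i + n) = Poly_Mapping.lookup f n"
  by (simp add: Var_mult_expand lookup_sum lookup_single when_def sum.delta' in_keys_iff)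

lemma lookup_Var_mult_zero: "Poly_Mapping.lookup n i = 0 \<Longrightarrow> Poly_Mapping.lookup (Var i * f) n = 0"
proof -
  assume n: "Poly_Mapping.lookup n i = 0"
  have "e i + m \<noteq> n" for m
  proof
    assume "e i + m = n"
    then have "Poly_Mapping.lookup (e i + m) i = 0" using n by simp
    then show False by (simp add: lookup_add)
  qed
  then show ?thesis by (simp add: Var_mult_expand lookup_sum lookup_single when_def)
qed

lemma Var_nonzero: "Var i \<noteq> 0"
  unfolding Var_def by (metis lookup_single_eq lookup_zero one_neq_zero)

lemma div_lemma:
  assumes "Var 0 * A + Var 1 * B = 0"
  shows "\<exists>C. A = Var 1 * C \<and> B = - (Var 0 * C)"
proof -
  have keys1: "Poly_Mapping.lookup m 1 \<ge> 1" if "m \<in> Poly_Mapping.keys A" for m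
  proof (rule ccontr)
    assume "\<not> Poly_Mapping.lookup m 1 \<ge> 1"
    then have m1: "Poly_Mapping.lookup (e 0 + m) 1 = 0" by (simp add: lookup_add lookup_single)
    have "Poly_Mapping.lookup A m = Poly_Mapping.lookup (Var 0 * A) (e 0 + m)"
      by (rule lookup_Var_mult_shift[symmetric])
    also have "Var 0 * A = - (Var 1 * B)" using assms by (simp add: eq_neg_iff_add_eq_0)
    also have "Poly_Mapping.lookup (- (Var 1 * B)) (e 0 + m) = 0"
      using lookup_Var_mult_zero[OF m1] by simp
    finally show False using that by (simp add: in_keys_iff)
  qed
  define C where "C = (\<Sum>m\<in>Poly_Mapping.keys A. Poly_Mapping.single (m - e 1) (Poly_Mapping.lookup A m))"
  have AC: "A = Var 1 * C"
  proof -
    have "Var 1 * C = (\<Sum>m\<in>Poly_Mapping.keys A. Poly_Mapping.single (e 1 + (m - e 1)) (Poly_Mapping.lookup A m))"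
      by (simp add: C_def sum_distrib_left Var_def mult_single)
    also have "\<dots> = (\<Sum>m\<in>Poly_Mapping.keys A. Poly_Mapping.single m (Poly_Mapping.lookup A m))"
      by (rule sum.cong[OF refl], subst add_sub_e[OF keys1], auto)
    also have "\<dots> = A" by (rule poly_expand[symmetric])
    finally show ?thesis by simp
  qed
  have "Var 1 * (Var 0 * C + B) = 0"
    using assms AC by (simp add: algebra_simps)
  then have "Var 0 * C + B = 0" using Var_nonzero[of 1] by simp
  then have "B = - (Var 0 * C)" by (simp add: eq_neg_iff_add_eq_0 add.commute)
  with AC show ?thesis by blast
qed

lemma Jac_Delta:
  assumes "Eu F = K \<alpha> * F"
  shows "\<exists>C. Jac F (Delta F) = wdet * C"
proof -
  define A where "A = pdiff 0 F * pdiff 0 (pdiff 1 F) - pdiff 1 F * pdiff 0 (pdiff 0 F)"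
  define B where "B = pdiff 0 F * pdiff 1 (pdiff 1 F) - pdiff 1 F * pdiff 0 (pdiff 1 F)"
  have J: "Jac F (Delta F) = Var 2 * A + Var 3 * B"
    by (simp add: A_def B_def Jac_def Delta_def pdiff_add pdiff_mult pdiff_Var pdiff_comm[of "Suc 0" 0] algebra_simps)
  have E0: "Eu (pdiff 0 F) = K (\<alpha> - 1) * pdiff 0 F"
    by (simp add: Eu_pdiff0 assms pdiff_mult pdiff_K flip: K_diff) (simp add: algebra_simps)
  have E1: "Eu (pdiff (Suc 0) F) = K (\<alpha> - 1) * pdiff (Suc 0) F"
    using Eu_pdiff1[of F] by (simp add: assms pdiff_mult pdiff_K flip: K_diff) (simp add: algebra_simps)
  have "Var 0 * A + Var 1 * B = pdiff 0 F * Eu (pdiff 1 F) - pdiff 1 F * Eu (pdiff 0 F)"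
    by (simp add: A_def B_def Eu_def pdiff_comm[of "Suc 0" 0] algebra_simps)
  also have "\<dots> = 0" by (simp add: E0 E1 algebra_simps)
  finally obtain C where "A = Var 1 * C" "B = - (Var 0 * C)" using div_lemma by blast
  then have "Jac F (Delta F) = wdet * (- C)"
    by (simp add: J wdet_def algebra_simps)
  then show ?thesis by blast
qed



definition DD :: "nat \<Rightarrow> mpoly \<Rightarrow> nat \<Rightarrow> nat \<Rightarrow> mpoly" where
  "DD d p a b = K (of_nat d - of_nat a) * (Delta ^^ a) p * (Delta ^^ Suc b) p
              - K (of_nat d - of_nat b) * (Delta ^^ Suc a) p * (Delta ^^ b) p"

definition W2 :: "mpoly \<Rightarrow> bool" where "W2 x \<longleftrightarrow> (\<exists>h. x = wdet * wdet * h)"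

lemma W2_diff: "W2 x \<Longrightarrow> W2 y \<Longrightarrow> W2 (x - y)"
  unfolding W2_def by (metis right_diff_distrib)
lemma W2_zero: "W2 0"
  unfolding W2_def by (metis mult_zero_right)
lemma W2_Delta: "W2 x \<Longrightarrow> W2 (Delta x)"
  unfolding W2_def by (auto simp: Delta_mult Delta_wdet)
lemma W2_uminus: "W2 x \<Longrightarrow> W2 (- x)"
  using W2_diff[OF W2_zero] by simp

lemma DD_same: "DD d p a a = 0"
  by (simp add: DD_def)

lemma DD_antisym: "DD d p b a = - DD d p a b"
  by (simp add: DD_def algebra_simps)

lemma DD_step: "Delta (DD d p a b) = DD d p (Suc a) b + DD d p a (Suc b)"
proof -
  have k1: "K (of_nat d - of_nat (Suc a)) = K (of_nat d - of_nat a) - 1"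
  proof -
    have "(of_nat d - of_nat (Suc a) :: complex) = (of_nat d - of_nat a) - 1" by simp
    then have "K (of_nat d - of_nat (Suc a)) = K (of_nat d - of_nat a) - K 1" by (simp only: K_diff)
    then show ?thesis by simp
  qed
  have k2: "K (of_nat d - of_nat (Suc b)) = K (of_nat d - of_nat b) - 1"
  proof -
    have "(of_nat d - of_nat (Suc b) :: complex) = (of_nat d - of_nat b) - 1" by simp
    then have "K (of_nat d - of_nat (Suc b)) = K (of_nat d - of_nat b) - K 1" by (simp only: K_diff)
    then show ?thesis by simp
  qed
  show ?thesis
    unfolding DD_def k1 k2
    by (simp add: Delta_diff Delta_mult Delta_K algebra_simps)
qed

lemma DD_base:
  assumes "homog_xy d p"
  shows "W2 (DD d p a (Suc a))"
proof -
  let ?F = "(Delta ^^ a) p"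
  have EF: "Eu ?F = K (of_nat d - of_nat a) * ?F" by (rule Eu_Delta_pow[OF assms])
  have EG: "Eu (Delta ?F) = K (of_nat d - of_nat (Suc a)) * Delta ?F"
    using Eu_Delta_pow[OF assms, of "Suc a"] by simp
  obtain C where C: "Jac ?F (Delta ?F) = wdet * C" using Jac_Delta[OF EF] by blast
  have "DD d p a (Suc a) = Eu ?F * Delta (Delta ?F) - Delta ?F * Eu (Delta ?F)"
    by (simp add: DD_def EF EG algebra_simps)
  also have "\<dots> = wdet * wdet * C" by (simp add: wJ C)
  finally show ?thesis unfolding W2_def by blast
qed

lemma DD_W2:
  assumes "homog_xy d p"
  shows "W2 (DD d p a b)"
proof -
  have main: "\<forall>a. W2 (DD d p a (a + n))" for n
  proof (induction n rule: nat_less_induct)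
    case (1 n)
    show ?case
    proof (cases n)
      case 0 then show ?thesis by (simp add: DD_same W2_zero)
    next
      case (Suc m)
      show ?thesis
      proof (cases m)
        case 0 then show ?thesis using Suc DD_base[OF assms] by simp
      next
        case (Suc m')
        show ?thesis
        proof
          fix a
          have h1: "W2 (DD d p a (a + m))" using "1" \<open>n = Suc m\<close> by auto
          have "\<forall>a. W2 (DD d p a (a + m'))" using "1" \<open>n = Suc m\<close> Suc by simp
          then have h2: "W2 (DD d p (Suc a) (Suc a + m'))" by blast
          have "DD d p a (a + n) = Delta (DD d p a (a + m)) - DD d p (Suc a) (Suc a + m')"
            using DD_step[of d p a "a + m"] \<open>n = Suc m\<close> Suc by simp
          then show "W2 (DD d p a (a + n))" using W2_diff[OF W2_Delta[OF h1] h2] by simp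
        qed
      qed
    qed
  qed
  show ?thesis
  proof (cases "a \<le> b")
    case True
    have "W2 (DD d p a (a + (b - a)))" using main[of "b - a"] by blast
    then show ?thesis using True by simp
  next
    case False
    then have "W2 (DD d p b a)" using main[of "a - b"] by (metis le_add_diff_inverse nat_le_linear)
    then have "W2 (- DD d p b a)" by (rule W2_uminus)
    then show ?thesis using DD_antisym[of d p a b] by simp
  qed
qed



lemma ideal_gen_zero: "0 \<in> ideal_gen S"
  unfolding ideal_gen_def by (rule CollectI, rule exI[of _ "{}"]) simp

lemma ideal_gen_base: "s \<in> S \<Longrightarrow> s \<in> ideal_gen S"
  unfolding ideal_gen_def by (rule CollectI, rule exI[of _ "{s}"], rule exI[of _ "\<lambda>_. 1"]) simp

lemma ideal_gen_mono: "S \<subseteq> T \<Longrightarrow> x \<in> ideal_gen S \<Longrightarrow> x \<in> ideal_gen T"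
proof -
  assume "S \<subseteq> T" "x \<in> ideal_gen S"
  then obtain F c where "finite F" "F \<subseteq> S" "x = (\<Sum>s\<in>F. c s * s)" unfolding ideal_gen_def by auto
  then show ?thesis using \<open>S \<subseteq> T\<close> unfolding ideal_gen_def by auto
qed

lemma ideal_gen_mult: "x \<in> ideal_gen S \<Longrightarrow> r * x \<in> ideal_gen S"
proof -
  assume "x \<in> ideal_gen S"
  then obtain F c where "finite F" "F \<subseteq> S" "x = (\<Sum>s\<in>F. c s * s)" unfolding ideal_gen_def by auto
  then have "r * x = (\<Sum>s\<in>F. (r * c s) * s)" by (simp add: sum_distrib_left mult.assoc)
  with \<open>finite F\<close> \<open>F \<subseteq> S\<close> show ?thesis unfolding ideal_gen_def by auto
qed

lemma ideal_gen_add: "x \<in> ideal_gen S \<Longrightarrow> y \<in> ideal_gen S \<Longrightarrow> x + y \<in> ideal_gen S"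
proof -
  assume "x \<in> ideal_gen S" "y \<in> ideal_gen S"
  then obtain F1 c1 F2 c2 where f: "finite F1" "F1 \<subseteq> S" "x = (\<Sum>s\<in>F1. c1 s * s)"
    "finite F2" "F2 \<subseteq> S" "y = (\<Sum>s\<in>F2. c2 s * s)" unfolding ideal_gen_def by auto
  define c where "c s = (if s \<in> F1 then c1 s else 0) + (if s \<in> F2 then c2 s else 0)" for s
  have "(\<Sum>s\<in>F1 \<union> F2. c s * s) = (\<Sum>s\<in>F1 \<union> F2. (if s \<in> F1 then c1 s * s else 0)) + (\<Sum>s\<in>F1 \<union> F2. (if s \<in> F2 then c2 s * s else 0))"
    unfolding sum.distrib[symmetric] by (rule sum.cong) (auto simp: c_def distrib_right)
  also have "\<dots> = x + y"
  proof -
    have "(\<Sum>s\<in>F1 \<union> F2. (if s \<in> F1 then c1 s * s else 0)) = (\<Sum>s\<in>(F1 \<union> F2) \<inter> F1. c1 s * s)"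
      using f by (intro sum.inter_restrict[symmetric]) simp
    moreover have "(\<Sum>s\<in>F1 \<union> F2. (if s \<in> F2 then c2 s * s else 0)) = (\<Sum>s\<in>(F1 \<union> F2) \<inter> F2. c2 s * s)"
      using f by (intro sum.inter_restrict[symmetric]) simp
    moreover have "(F1 \<union> F2) \<inter> F1 = F1" "(F1 \<union> F2) \<inter> F2 = F2" by auto
    ultimately show ?thesis using f by simp
  qed
  finally have "x + y = (\<Sum>s\<in>F1 \<union> F2. c s * s)" by simp
  moreover have "finite (F1 \<union> F2)" "F1 \<union> F2 \<subseteq> S" using f by auto
  ultimately show ?thesis unfolding ideal_gen_def by auto
qed

lemma ideal_gen_diff: "x \<in> ideal_gen S \<Longrightarrow> y \<in> ideal_gen S \<Longrightarrow> x - y \<in> ideal_gen S"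
  using ideal_gen_add[of x S "(-1) * y"] ideal_gen_mult[of y S "-1"] by simp

lemma Delta_in_Bset: "a \<le> d \<Longrightarrow> (Delta ^^ a) p \<in> Bset d p"
  unfolding Bset_def by auto

lemma wdet_in_Bset: "wdet \<in> Bset d p"
  unfolding Bset_def by auto

lemma move:
  assumes hom: "homog_xy d p"
    and l: "l1 < k" "l2 < k" "l1 \<noteq> l2"
    and v1: "v l1 < d" and v2: "v l2 \<ge> 1" and vd: "\<forall>l<k. v l \<le> d"
  shows "\<exists>c. (\<Prod>l<k. (Delta ^^ v l) p) - c * (\<Prod>l<k. (Delta ^^ (v(l1 := Suc (v l1), l2 := v l2 - 1)) l) p)
           \<in> ideal_gen (Bpow_w k d p)"
proof -
  define v' where "v' = v(l1 := Suc (v l1), l2 := v l2 - 1)"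
  define a where "a = v l1"
  define b where "b = v l2 - 1"
  have vb: "v l2 = Suc b" using v2 unfolding b_def by simp
  define S where "S = {..<k} - {l1} - {l2}"
  define R where "R = (\<Prod>l\<in>S. (Delta ^^ v l) p)"
  have split: "(\<Prod>l<k. f l) = f l1 * f l2 * (\<Prod>l\<in>S. f l)" for f :: "nat \<Rightarrow> mpoly"
  proof -
    have "(\<Prod>l<k. f l) = f l1 * (\<Prod>l\<in>{..<k} - {l1}. f l)"
      using l by (intro prod.remove) auto
    also have "(\<Prod>l\<in>{..<k} - {l1}. f l) = f l2 * (\<Prod>l\<in>S. f l)"
      unfolding S_def using l by (intro prod.remove) auto
    finally show ?thesis by (simp add: mult.assoc)
  qed
  have Pv: "(\<Prod>l<k. (Delta ^^ v l) p) = (Delta ^^ a) p * (Delta ^^ Suc b) p * R"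
    using split[of "\<lambda>l. (Delta ^^ v l) p"] by (simp add: R_def a_def vb)
  have R': "(\<Prod>l\<in>S. (Delta ^^ v' l) p) = R"
    unfolding R_def by (rule prod.cong) (auto simp: v'_def S_def)
  have Pv': "(\<Prod>l<k. (Delta ^^ v' l) p) = (Delta ^^ Suc a) p * (Delta ^^ b) p * R"
  proof -
    have "(\<Prod>l<k. (Delta ^^ v' l) p) = (Delta ^^ v' l1) p * (Delta ^^ v' l2) p * (\<Prod>l\<in>S. (Delta ^^ v' l) p)"
      by (rule split)
    also have "\<dots> = (Delta ^^ Suc a) p * (Delta ^^ b) p * R"
      unfolding R' using l by (simp add: v'_def a_def b_def)
    finally show ?thesis .
  qed
  obtain h where h: "DD d p a b = wdet * wdet * h" using DD_W2[OF hom, of a b] unfolding W2_def by blast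
  have eq: "K (of_nat d - of_nat a) * (\<Prod>l<k. (Delta ^^ v l) p) - K (of_nat d - of_nat b) * (\<Prod>l<k. (Delta ^^ v' l) p)
      = h * (prod_list (wdet # map (\<lambda>l. (Delta ^^ v l) p) (sorted_list_of_set S)) * wdet)"
  proof -
    have pl: "prod_list (map (\<lambda>l. (Delta ^^ v l) p) (sorted_list_of_set S)) = R"
      unfolding R_def by (subst prod.distinct_set_conv_list[symmetric]) (auto simp: S_def)
    have X: "prod_list (wdet # map (\<lambda>l. (Delta ^^ v l) p) (sorted_list_of_set S)) * wdet = wdet * wdet * R"
      by (simp only: prod_list.Cons pl) (simp add: mult_ac)
    have "K (of_nat d - of_nat a) * (\<Prod>l<k. (Delta ^^ v l) p) - K (of_nat d - of_nat b) * (\<Prod>l<k. (Delta ^^ v' l) p)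
        = DD d p a b * R"
      unfolding Pv Pv' DD_def by (simp add: algebra_simps)
    also have "\<dots> = h * (wdet * wdet * R)" by (simp add: h mult_ac)
    finally show ?thesis by (simp only: X)
  qed
  have mem: "prod_list (wdet # map (\<lambda>l. (Delta ^^ v l) p) (sorted_list_of_set S)) * wdet \<in> Bpow_w k d p"
  proof -
    have cS: "card S = k - 2" unfolding S_def using l by (simp add: card_Diff_singleton_if)
    have "length (wdet # map (\<lambda>l. (Delta ^^ v l) p) (sorted_list_of_set S)) = k - 1"
      using cS l by simp
    moreover have "set (wdet # map (\<lambda>l. (Delta ^^ v l) p) (sorted_list_of_set S)) \<subseteq> Bset d p"
      using vd wdet_in_Bset Delta_in_Bset by (auto simp: S_def)
    ultimately show ?thesis unfolding Bpow_w_def by blast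
  qed
  define u where "u = K (1 / (of_nat d - of_nat a))"
  have u1: "u * K (of_nat d - of_nat a) = 1"
  proof -
    have "(of_nat d - of_nat a :: complex) \<noteq> 0" using v1 unfolding a_def by simp
    then show ?thesis unfolding u_def by (simp add: K_mult)
  qed
  have "u * (h * (prod_list (wdet # map (\<lambda>l. (Delta ^^ v l) p) (sorted_list_of_set S)) * wdet)) \<in> ideal_gen (Bpow_w k d p)"
    by (intro ideal_gen_mult ideal_gen_base mem)
  also have "u * (h * (prod_list (wdet # map (\<lambda>l. (Delta ^^ v l) p) (sorted_list_of_set S)) * wdet))
     = (\<Prod>l<k. (Delta ^^ v l) p) - (u * K (of_nat d - of_nat b)) * (\<Prod>l<k. (Delta ^^ v' l) p)"
    unfolding eq[symmetric] by (simp add: algebra_simps u1 flip: mult.assoc)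
  finally show ?thesis unfolding v'_def by blast
qed

lemma main_ind:
  assumes hom: "homog_xy d p"
    and id: "\<forall>l<k. i l \<le> d"
  shows "(\<forall>l<k. v l \<le> d) \<Longrightarrow> (\<Sum>l<k. v l) = (\<Sum>l<k. i l) \<Longrightarrow>
     \<exists>c. (\<Prod>l<k. (Delta ^^ v l) p) - c * (\<Prod>l<k. (Delta ^^ i l) p) \<in> ideal_gen (Bpow_w k d p)"
proof (induction "\<Sum>l<k. v l - i l" arbitrary: v rule: less_induct)
  case (less v)
  show ?case
  proof (cases "\<forall>l<k. v l = i l")
    case True
    then have "(\<Prod>l<k. (Delta ^^ v l) p) = (\<Prod>l<k. (Delta ^^ i l) p)" by (intro prod.cong) auto
    then have "(\<Prod>l<k. (Delta ^^ v l) p) - 1 * (\<Prod>l<k. (Delta ^^ i l) p) = 0" by simp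
    then show ?thesis using ideal_gen_zero by metis
  next
    case False
    then obtain l0 where l0: "l0 < k" "v l0 \<noteq> i l0" by blast
    have "\<exists>l2<k. v l2 > i l2"
    proof (rule ccontr)
      assume "\<not> (\<exists>l2<k. v l2 > i l2)"
      then have le: "\<forall>l\<in>{..<k}. v l \<le> i l" by auto
      then have "v l0 < i l0" using l0 by (simp add: order_less_le)
      then have "(\<Sum>l<k. v l) < (\<Sum>l<k. i l)"
        using le l0 by (intro sum_strict_mono_ex1) auto
      then show False using less.prems by simp
    qed
    then obtain l2 where l2: "l2 < k" "v l2 > i l2" by blast
    have "\<exists>l1<k. v l1 < i l1"
    proof (rule ccontr)
      assume "\<not> (\<exists>l1<k. v l1 < i l1)"
      then have le: "\<forall>l\<in>{..<k}. i l \<le> v l" by auto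
      then have "(\<Sum>l<k. i l) < (\<Sum>l<k. v l)"
        using le l2 by (intro sum_strict_mono_ex1) auto
      then show False using less.prems by simp
    qed
    then obtain l1 where l1: "l1 < k" "v l1 < i l1" by blast
    have ne: "l1 \<noteq> l2" using l1 l2 by auto
    define v' where "v' = v(l1 := Suc (v l1), l2 := v l2 - 1)"
    have v'd: "\<forall>l<k. v' l \<le> d"
      using less.prems(1) id l1 l2 ne by (auto simp: v'_def)
    have sumv': "(\<Sum>l<k. v' l) = (\<Sum>l<k. i l)"
    proof -
      define S where "S = {..<k} - {l1} - {l2}"
      have split: "(\<Sum>l<k. f l) = f l1 + f l2 + (\<Sum>l\<in>S. f l)" for f :: "nat \<Rightarrow> nat"
      proof -
        have "(\<Sum>l<k. f l) = f l1 + (\<Sum>l\<in>{..<k} - {l1}. f l)"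
          using l1 by (intro sum.remove) auto
        also have "(\<Sum>l\<in>{..<k} - {l1}. f l) = f l2 + (\<Sum>l\<in>S. f l)"
          unfolding S_def using l2 ne by (intro sum.remove) auto
        finally show ?thesis by simp
      qed
      have "(\<Sum>l\<in>S. v' l) = (\<Sum>l\<in>S. v l)" by (rule sum.cong) (auto simp: S_def v'_def)
      then have "(\<Sum>l<k. v' l) = (\<Sum>l<k. v l)"
        using split[of v'] split[of v] l2 ne by (simp add: v'_def)
      then show ?thesis using less.prems by simp
    qed
    have dec: "(\<Sum>l<k. v' l - i l) < (\<Sum>l<k. v l - i l)"
    proof (rule sum_strict_mono_ex1)
      show "\<forall>x\<in>{..<k}. v' x - i x \<le> v x - i x" using l1 by (auto simp: v'_def)
      show "\<exists>a\<in>{..<k}. v' a - i a < v a - i a" using l2 ne by (intro bexI[of _ l2]) (auto simp: v'_def)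
    qed simp
    obtain c' where c': "(\<Prod>l<k. (Delta ^^ v' l) p) - c' * (\<Prod>l<k. (Delta ^^ i l) p) \<in> ideal_gen (Bpow_w k d p)"
      using less.hyps[OF dec v'd sumv'] by blast
    have "v l1 < d" using l1 id by fastforce
    then obtain c where c: "(\<Prod>l<k. (Delta ^^ v l) p) - c * (\<Prod>l<k. (Delta ^^ v' l) p) \<in> ideal_gen (Bpow_w k d p)"
      using move[OF hom l1(1) l2(1) ne _ _ less.prems(1)] l2 unfolding v'_def by fastforce
    have "((\<Prod>l<k. (Delta ^^ v l) p) - c * (\<Prod>l<k. (Delta ^^ v' l) p)) + c * ((\<Prod>l<k. (Delta ^^ v' l) p) - c' * (\<Prod>l<k. (Delta ^^ i l) p)) \<in> ideal_gen (Bpow_w k d p)"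
      by (intro ideal_gen_add ideal_gen_mult c c')
    then have "(\<Prod>l<k. (Delta ^^ v l) p) - (c * c') * (\<Prod>l<k. (Delta ^^ i l) p) \<in> ideal_gen (Bpow_w k d p)"
      by (simp add: algebra_simps)
    then show ?thesis by blast
  qed
qed

theorem lemma3p16:
  fixes k d :: nat and p :: mpoly and i j :: "nat \<Rightarrow> nat"
  assumes "k \<ge> 1"
    and "homog_xy d p"
    and "\<forall>l<k. i l \<le> d" and "\<forall>l<k. j l \<le> d"
    and "(\<Sum>l<k. i l) = (\<Sum>l<k. j l)"
  shows "(\<Prod>l<k. (Delta ^^ j l) p)
           \<in> ideal_gen ({\<Prod>l<k. (Delta ^^ i l) p} \<union> Bpow_w k d p)"
proof -
  obtain c where c: "(\<Prod>l<k. (Delta ^^ j l) p) - c * (\<Prod>l<k. (Delta ^^ i l) p) \<in> ideal_gen (Bpow_w k d p)"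
    using main_ind[OF assms(2) assms(3), of j] assms(4,5) by auto
  let ?T = "{\<Prod>l<k. (Delta ^^ i l) p} \<union> Bpow_w k d p"
  have "c * (\<Prod>l<k. (Delta ^^ i l) p) + ((\<Prod>l<k. (Delta ^^ j l) p) - c * (\<Prod>l<k. (Delta ^^ i l) p)) \<in> ideal_gen ?T"
    by (intro ideal_gen_add ideal_gen_mult ideal_gen_base ideal_gen_mono[OF _ c]) auto
  then show ?thesis by simp
qed

end
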